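(* Let $E$ be a pointed closed convex cone in a finite-dimensional real inner product space and $F\subsetneq E$ a maximal face (maximal among faces different from $E$). Then $F$ is exposed in $E$, the relative dual face $F^\perp\cap E^\circledast$ is nonzero, and $F^\perp\cap E^\circledast$ is an extreme ray of $E^\circledast$ if and only if it contains an exposed ray of $E^\circledast$.
   Context: $E^\circledast=E^*\cap\operatorname{span}E$ where $E^*=\{y:\langle y,x\rangle\ge0\ \forall x\in E\}$. A face of a convex set $C$ is a subset $F$ such that every segment in $C$ whose midpoint lies in $F$ lies in $F$; a face is exposed if it is the intersection of $C$ with a supporting hyperplane. An extreme ray is a one-dimensional face; an exposed ray is an exposed one-dimensional face. *)

theory Defs
  imports "HOL-Analysis.Analysis"
begin

definition dual_cone :: "'a::euclidean_space set \<Rightarrow> 'a set" where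
  "dual_cone E = {y. \<forall>x\<in>E. 0 \<le> y \<bullet> x}"

definition rel_dual_cone :: "'a::euclidean_space set \<Rightarrow> 'a set" where
  "rel_dual_cone E = dual_cone E \<inter> span E"

definition orth_compl :: "'a::euclidean_space set \<Rightarrow> 'a set" where
  "orth_compl F = {y. \<forall>x\<in>F. y \<bullet> x = 0}"

definition pointed_cone :: "'a::real_vector set \<Rightarrow> bool" where
  "pointed_cone E \<longleftrightarrow> E \<inter> uminus ` E = {0}"

definition extreme_ray_of :: "'a::euclidean_space set \<Rightarrow> 'a set \<Rightarrow> bool" where
  "extreme_ray_of R C \<longleftrightarrow> R face_of C \<and> aff_dim R = 1"

definition exposed_ray_of :: "'a::euclidean_space set \<Rightarrow> 'a set \<Rightarrow> bool" where
  "exposed_ray_of R C \<longleftrightarrow> R exposed_face_of C \<and> aff_dim R = 1"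

end

theory Submission
  imports Defs
begin

lemma proj_span:
  fixes a :: "'a::euclidean_space"
  obtains a' where "a' \<in> span E" "\<And>x. x \<in> span E \<Longrightarrow> a' \<bullet> x = a \<bullet> x"
proof -
  obtain y z where y: "y \<in> span E" and z: "\<And>w. w \<in> span E \<Longrightarrow> orthogonal z w" and a: "a = y + z"
    using orthogonal_subspace_decomp_exists by blast
  show ?thesis
  proof (rule that[OF y])
    fix x assume "x \<in> span E"
    then have "z \<bullet> x = 0" using z by (simp add: orthogonal_def)
    then show "y \<bullet> x = a \<bullet> x" by (simp add: a inner_add_left)
  qed
qed

lemma cone_zero:
  assumes "convex_cone E" shows "0 \<in> E"
  using assms unfolding convex_cone_def conic_def
  by (metis all_not_in_conv scale_zero_left order_refl)

lemma bidual:
  fixes E :: "'a::euclidean_space set"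
  assumes cone: "convex_cone E" and closed: "closed E" and zs: "z \<in> span E"
    and zy: "\<And>y. y \<in> rel_dual_cone E \<Longrightarrow> 0 \<le> z \<bullet> y"
  shows "z \<in> E"
proof (rule ccontr)
  assume "z \<notin> E"
  have cvx: "convex E" using cone by (simp add: convex_cone_def)
  obtain a b where ab: "a \<bullet> z < b" "\<And>x. x \<in> E \<Longrightarrow> b < a \<bullet> x"
    using separating_hyperplane_closed_point[OF cvx closed \<open>z \<notin> E\<close>] by blast
  have b0: "b < 0" using ab(2)[OF cone_zero[OF cone]] by simp
  have ax: "0 \<le> a \<bullet> x" if x: "x \<in> E" for x
  proof (rule ccontr)
    assume "\<not> 0 \<le> a \<bullet> x"
    then have neg: "a \<bullet> x < 0" by simp
    define c where "c = b / (a \<bullet> x)"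
    have c0: "0 \<le> c" using neg b0 by (simp add: c_def divide_nonpos_neg)
    have "c *\<^sub>R x \<in> E" using cone x c0 unfolding convex_cone_def conic_def by blast
    then have "b < a \<bullet> (c *\<^sub>R x)" by (rule ab(2))
    also have "a \<bullet> (c *\<^sub>R x) = b" using neg by (simp add: c_def)
    finally show False by simp
  qed
  obtain a' where a': "a' \<in> span E" "\<And>x. x \<in> span E \<Longrightarrow> a' \<bullet> x = a \<bullet> x"
    using proj_span by blast
  have "a' \<in> rel_dual_cone E"
  proof -
    have "\<forall>x\<in>E. 0 \<le> a' \<bullet> x" using a'(2) ax span_base by metis
    then show ?thesis unfolding rel_dual_cone_def dual_cone_def using a'(1) by blast
  qed
  then have "0 \<le> z \<bullet> a'" by (rule zy)
  moreover have "z \<bullet> a' = a \<bullet> z" using a'(2)[OF zs] by (simp add: inner_commute)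
  ultimately show False using ab(1) b0 by simp
qed

lemma face_perp:
  fixes E :: "'a::euclidean_space set"
  assumes cone: "convex_cone E" and w: "w \<in> dual_cone E"
  shows "E \<inter> {x. w \<bullet> x = 0} face_of E"
  using face_of_Int_supporting_hyperplane_ge[of E 0 w] cone w
  unfolding convex_cone_def dual_cone_def by auto

lemma rel_dual_convex:
  fixes E :: "'a::euclidean_space set"
  shows "convex (rel_dual_cone E)"
proof -
  have "dual_cone E = (\<Inter>x\<in>E. {y. 0 \<le> y \<bullet> x})" unfolding dual_cone_def by auto
  then have "convex (dual_cone E)"
    by (auto intro!: convex_INT convex_halfspace_ge[of 0 _, simplified inner_commute])
  then show ?thesis unfolding rel_dual_cone_def
    by (simp add: convex_Int subspace_imp_convex subspace_span)
qed

theorem mainTheorem10: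
  fixes E F :: "'a::euclidean_space set"
  assumes cone: "convex_cone E" and closed: "closed E" and pointed: "pointed_cone E"
    and face: "F face_of E" and nonempty: "F \<noteq> {}" and proper: "F \<noteq> E"
    and maximal: "\<And>G. G face_of E \<Longrightarrow> G \<noteq> E \<Longrightarrow> F \<subseteq> G \<Longrightarrow> G = F"
  shows "F exposed_face_of E \<and>
         orth_compl F \<inter> rel_dual_cone E \<noteq> {0} \<and>
         (extreme_ray_of (orth_compl F \<inter> rel_dual_cone E) (rel_dual_cone E) \<longleftrightarrow>
         (\<exists>R. exposed_ray_of R (rel_dual_cone E) \<and> R \<subseteq> orth_compl F \<inter> rel_dual_cone E))"
proof -
  define L where "L = span E"
  define Ed where "Ed = rel_dual_cone E"
  define D where "D = orth_compl F \<inter> Ed"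
  have cvxE: "convex E" using cone by (simp add: convex_cone_def)
  have conicE: "conic E" using cone by (simp add: convex_cone_def)
  have E0: "0 \<in> E" by (rule cone_zero[OF cone])
  have FE: "F \<subseteq> E" using face by (rule face_of_imp_subset)
  have cvxF: "convex F" using face by (rule face_of_imp_convex)
  obtain x where xF: "x \<in> rel_interior F"
    using rel_interior_eq_empty cvxF nonempty by blast
  have xE: "x \<in> E" using xF FE rel_interior_subset by blast
  have xnot: "x \<notin> rel_interior E"
    using face_of_disjoint_rel_interior[OF face proper] xF rel_interior_subset FE by blast
  obtain a where a0: "a \<noteq> 0" and ale: "\<And>y. y \<in> E \<Longrightarrow> a \<bullet> x \<le> a \<bullet> y"
    and alt: "\<And>y. y \<in> rel_interior E \<Longrightarrow> a \<bullet> x < a \<bullet> y"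
    using supporting_hyperplane_rel_boundary[OF cvxE xE xnot] by blast
  have "a \<bullet> x \<le> 0" using ale[OF E0] by simp
  moreover have "2 *\<^sub>R x \<in> E" using conicE xE by (simp add: conicD)
  then have "a \<bullet> x \<le> 2 * (a \<bullet> x)" using ale by fastforce
  ultimately have ax0: "a \<bullet> x = 0" by simp
  have ay: "0 \<le> a \<bullet> y" if "y \<in> E" for y using ale[OF that] ax0 by simp
  obtain y0 where y0: "y0 \<in> rel_interior E"
    using rel_interior_eq_empty cvxE E0 by blast
  have ay0: "0 < a \<bullet> y0" using alt[OF y0] ax0 by simp
  have y0E: "y0 \<in> E" using y0 rel_interior_subset by blast
  obtain a' where a'L: "a' \<in> span E" and a'eq: "\<And>x. x \<in> span E \<Longrightarrow> a' \<bullet> x = a \<bullet> x"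
    using proj_span by blast
  have a'E: "\<And>y. y \<in> E \<Longrightarrow> a' \<bullet> y = a \<bullet> y" using a'eq span_base by blast
  have a'dual: "a' \<in> dual_cone E" unfolding dual_cone_def using a'E ay by simp
  define G where "G = E \<inter> {y. a' \<bullet> y = 0}"
  have Gface: "G face_of E" unfolding G_def by (rule face_perp[OF cone a'dual])
  have xG: "x \<in> G" unfolding G_def using xE a'E ax0 by simp
  have FG: "F \<subseteq> G" using subset_of_face_of[OF Gface FE] xG xF by blast
  have GE: "G \<noteq> E" using y0E ay0 a'E unfolding G_def by force
  have GF: "G = F" using maximal[OF Gface GE FG] .
  have exposed: "F exposed_face_of E"
    unfolding exposed_face_of_def
  proof (intro conjI exI)
    show "F face_of E" by (rule face)
    show "E \<subseteq> {y. (- a') \<bullet> y \<le> 0}" using a'E ay by auto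
    show "F = E \<inter> {y. (- a') \<bullet> y = 0}" using GF unfolding G_def by auto
  qed
  have a'D: "a' \<in> D" unfolding D_def Ed_def orth_compl_def rel_dual_cone_def
    using a'dual a'L FG unfolding G_def by auto
  have a'ne: "a' \<noteq> 0" using ay0 a'E y0E by force
  have Dne: "D \<noteq> {0}" using a'D a'ne by blast
  have Ed_sub: "Ed \<subseteq> dual_cone E" "Ed \<subseteq> span E" unfolding Ed_def rel_dual_cone_def by auto
  have Deq: "D = Ed \<inter> {y. (- x) \<bullet> y = 0}"
  proof
    show "D \<subseteq> Ed \<inter> {y. (- x) \<bullet> y = 0}"
      using xF rel_interior_subset unfolding D_def orth_compl_def
      by (auto simp: inner_commute)
  next
    show "Ed \<inter> {y. (- x) \<bullet> y = 0} \<subseteq> D"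
    proof
      fix y assume y: "y \<in> Ed \<inter> {y. (- x) \<bullet> y = 0}"
      then have yd: "y \<in> dual_cone E" using Ed_sub by blast
      have Hf: "E \<inter> {e. y \<bullet> e = 0} face_of E" by (rule face_perp[OF cone yd])
      have "x \<in> E \<inter> {e. y \<bullet> e = 0}" using y xE by (simp add: inner_commute)
      then have "F \<subseteq> E \<inter> {e. y \<bullet> e = 0}" using subset_of_face_of[OF Hf FE] xF by blast
      then show "y \<in> D" using y unfolding D_def orth_compl_def by auto
    qed
  qed
  have cvxEd: "convex Ed" unfolding Ed_def by (rule rel_dual_convex)
  have Dexp: "D exposed_face_of Ed" unfolding Deq
  proof (rule exposed_face_of_Int_supporting_hyperplane_le[OF cvxEd])
    fix y assume "y \<in> Ed"
    then have "0 \<le> y \<bullet> x" using Ed_sub xE unfolding dual_cone_def by blast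
    then show "(- x) \<bullet> y \<le> 0" by (simp add: inner_commute)
  qed
  have iff: "extreme_ray_of D Ed \<longleftrightarrow> (\<exists>R. exposed_ray_of R Ed \<and> R \<subseteq> D)"
  proof
    assume "extreme_ray_of D Ed"
    then show "\<exists>R. exposed_ray_of R Ed \<and> R \<subseteq> D"
      using Dexp unfolding extreme_ray_of_def exposed_ray_of_def by blast
  next
    assume "\<exists>R. exposed_ray_of R Ed \<and> R \<subseteq> D"
    then obtain R where Rexp: "R exposed_face_of Ed" and Rdim: "aff_dim R = 1" and RD: "R \<subseteq> D"
      unfolding exposed_ray_of_def by blast
    obtain c b where cb: "Ed \<subseteq> {y. c \<bullet> y \<le> b}" and Req: "R = Ed \<inter> {y. c \<bullet> y = b}"
      using Rexp unfolding exposed_face_of_def by blast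
    have Rface: "R face_of Ed" using Rexp unfolding exposed_face_of_def by blast
    obtain w where wR: "w \<in> R" and w0: "w \<noteq> 0"
    proof (rule ccontr)
      assume "\<not> thesis"
      then have "R \<subseteq> {0}" using that by blast
      then have "R = {} \<or> R = {0}" by blast
      then show False using Rdim by auto
    qed
    have zEd: "0 \<in> Ed" unfolding Ed_def rel_dual_cone_def dual_cone_def by (simp add: span_zero)
    have b0: "0 \<le> b" using cb zEd by auto
    have wEd: "w \<in> Ed" using wR Req by blast
    have "2 *\<^sub>R w \<in> Ed" using wEd unfolding Ed_def rel_dual_cone_def dual_cone_def
      by (auto simp: span_mul)
    then have "c \<bullet> (2 *\<^sub>R w) \<le> b" using cb by blast
    moreover have "c \<bullet> w = b" using wR Req by blast
    ultimately have bz: "b = 0" using b0 by simp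
    have cw: "c \<bullet> w = 0" using wR Req bz by blast
    have wdual: "w \<in> dual_cone E" and wL: "w \<in> span E" using wEd Ed_sub by blast+
    have wF: "w \<in> orth_compl F" using wR RD unfolding D_def by blast
    define H where "H = E \<inter> {e. w \<bullet> e = 0}"
    have Hface: "H face_of E" unfolding H_def by (rule face_perp[OF cone wdual])
    have FH: "F \<subseteq> H" using wF FE unfolding H_def orth_compl_def by auto
    have HE: "H \<noteq> E"
    proof
      assume "H = E"
      then have "\<And>e. e \<in> E \<Longrightarrow> orthogonal w e" unfolding H_def orthogonal_def by blast
      then have "orthogonal w w" using wL orthogonal_to_span by blast
      then show False using w0 by (simp add: orthogonal_def)
    qed
    have HF: "H = F" using maximal[OF Hface HE FH] .
    obtain c' where c'L: "c' \<in> span E" and c'eq: "\<And>x. x \<in> span E \<Longrightarrow> c' \<bullet> x = c \<bullet> x"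
      using proj_span by blast
    have zL: "- c' \<in> span E" using c'L by (simp add: span_neg)
    have zE: "- c' \<in> E"
    proof (rule bidual[OF cone closed zL])
      fix y assume y: "y \<in> rel_dual_cone E"
      then have "y \<in> span E" "c \<bullet> y \<le> b" using cb Ed_sub unfolding Ed_def by blast+
      then show "0 \<le> - c' \<bullet> y" using c'eq bz by simp
    qed
    have "w \<bullet> (- c') = 0" using c'eq[OF wL] cw by (simp add: inner_commute)
    then have zF: "- c' \<in> F" using zE HF unfolding H_def by blast
    have "D \<subseteq> R"
    proof
      fix y assume y: "y \<in> D"
      then have yEd: "y \<in> Ed" and yL: "y \<in> span E" using Ed_sub unfolding D_def by blast+
      have "y \<bullet> (- c') = 0" using y zF unfolding D_def orth_compl_def by blast
      then have "c \<bullet> y = 0" using c'eq[OF yL] by (simp add: inner_commute)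
      then show "y \<in> R" using Req yEd bz by blast
    qed
    then have "D = R" using RD by blast
    then show "extreme_ray_of D Ed" using Rface Rdim unfolding extreme_ray_of_def by simp
  qed
  show ?thesis using exposed Dne iff unfolding D_def Ed_def by blast
qed

end
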